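(* Let $T>0$, $W\in C^1([0,T),\mathbb R^{d\times s})$ with $\mathrm{rank}(W(t))=s$ for all $t\in[0,T)$, and let $V(t)=\mathrm{range}(W(t))\in\mathcal G(s,d)$. Then for every $\tau\in[0,T)$ the function $t\mapsto\angle(V(\tau),V(t))$ is differentiable from the right at $t=\tau$, and $$\frac{d}{dt}\angle(V(\tau),V(t))\Big|_{t=\tau+}=\Big\|(I_d-P_{V(\tau)})\,\frac{dW}{dt}(\tau)\,\big(W(\tau)^\top W(\tau)\big)^{-1/2}\Big\|,$$ where $\|\cdot\|$ is the spectral norm on $\mathbb R^{d\times s}$ and $P_{V(\tau)}$ is the orthogonal projection onto $V(\tau)$.
   Context: $\mathcal G(s,d)$ is the Grassmannian of $s$-dimensional subspaces of $\mathbb R^d$. For $V,W\in\mathcal G(s,d)$ choose $P,Q\in\mathbb R^{d\times s}$ with orthonormal columns spanning $V$ and $W$; the principal angles $0\le\phi_1\le\dots\le\phi_s\le\pi/2$ are defined by $\cos\phi_j=\sigma_j$ where $\sigma_1\ge\dots\ge\sigma_s\ge0$ are the singular values of $P^\top Q$, and $\angle(V,W):=\phi_s$ is the maximal principal angle. $(W^\top W)^{-1/2}$ denotes the inverse of the symmetric positive definite square root. *)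

theory Defs
  imports "HOL-Analysis.Analysis"
begin

text \<open>Matrices in R^(d x s) are represented as real^'s^'d (d rows, s columns).\<close>

definition col_space :: "real^'s^'d \<Rightarrow> (real^'d) set" where
  "col_space A = range (\<lambda>x. A *v x)"

definition orthonormal_cols :: "real^'s^'d \<Rightarrow> bool" where
  "orthonormal_cols P \<longleftrightarrow> transpose P ** P = mat 1"

definition real_eigenvalues :: "real^'n^'n \<Rightarrow> real set" where
  "real_eigenvalues A = {l. \<exists>v. v \<noteq> 0 \<and> A *v v = l *s v}"

definition singular_values :: "real^'n^'m \<Rightarrow> real set" where
  "singular_values A = sqrt ` real_eigenvalues (transpose A ** A)"

definition onb_matrix :: "('s::finite) itself \<Rightarrow> (real^('d::finite)) set \<Rightarrow> real^'s^'d" where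
  "onb_matrix _ V = (SOME P. orthonormal_cols P \<and> col_space P = V)"

definition max_principal_angle :: "('s::finite) itself \<Rightarrow> (real^('d::finite)) set \<Rightarrow> (real^'d) set \<Rightarrow> real" where
  "max_principal_angle S V U =
     arccos (Min (singular_values (transpose (onb_matrix S V) ** onb_matrix S U)))"

definition orth_proj :: "(real^'d) set \<Rightarrow> real^'d \<Rightarrow> real^'d" where
  "orth_proj V x = (THE y. y \<in> V \<and> (\<forall>v\<in>V. (x - y) \<bullet> v = 0))"

definition pos_def_matrix :: "real^'n^'n \<Rightarrow> bool" where
  "pos_def_matrix S \<longleftrightarrow> transpose S = S \<and> (\<forall>x. x \<noteq> 0 \<longrightarrow> x \<bullet> (S *v x) > 0)"

definition mat_sqrt :: "real^'n^'n \<Rightarrow> real^'n^'n" where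
  "mat_sqrt A = (THE S. pos_def_matrix S \<and> S ** S = A)"

definition spec_norm :: "real^'n^'m \<Rightarrow> real" where
  "spec_norm A = onorm (\<lambda>x. A *v x)"

end

theory Submission
  imports Defs
begin


lemma dot_transpose: "(A *v x) \<bullet> y = x \<bullet> (transpose A *v (y::real^'m))"
  for A :: "real^'n^'m"
  by (metis dot_lmul_matrix inner_commute transpose_matrix_vector)

lemma sym_dot: "transpose A = A \<Longrightarrow> (A *v x) \<bullet> y = x \<bullet> (A *v (y::real^'n))"
  for A :: "real^'n^'n"
  by (metis dot_transpose)

lemma mv_scale: "(A::real^'n^'m) *v (c *\<^sub>R x) = c *\<^sub>R (A *v x)"
  by (simp add: matrix_vector_mult_def vec_eq_iff sum_distrib_left algebra_simps scaleR_vec_def)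

lemma mv_diff: "(A::real^'n^'m) *v (x - y) = A *v x - A *v y"
  by (simp add: matrix_vector_mult_diff_distrib)

lemma mv_add: "(A::real^'n^'m) *v (x + y) = A *v x + A *v y"
  by (simp add: matrix_vector_right_distrib)

lemma psd_kernel:
  fixes A :: "real^'n^'n"
  assumes sym: "transpose A = A" and U: "subspace U"
    and nn: "\<And>x. x \<in> U \<Longrightarrow> x \<bullet> (A *v x) - m * (x \<bullet> x) \<ge> 0"
    and v: "v \<in> U" and w: "A *v v - m *\<^sub>R v \<in> U"
    and z: "v \<bullet> (A *v v) - m * (v \<bullet> v) = 0"
  shows "A *v v = m *\<^sub>R v"
proof (rule ccontr)
  define w where "w = A *v v - m *\<^sub>R v"
  assume "A *v v \<noteq> m *\<^sub>R v"
  hence a: "w \<bullet> w > 0" by (simp add: w_def)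
  define q where "q x = x \<bullet> (A *v x) - m * (x \<bullet> x)" for x
  have qw: "q w \<ge> 0" using nn w unfolding q_def w_def by auto
  define t where "t = (w \<bullet> w) / (q w + 1)"
  have tpos: "t > 0" using a qw by (simp add: t_def)
  have "v - t *\<^sub>R w \<in> U" using U v w unfolding w_def
    by (simp add: subspace_diff subspace_mul)
  hence "q (v - t *\<^sub>R w) \<ge> 0" using nn unfolding q_def by auto
  moreover have "q (v - t *\<^sub>R w) = q v - 2 * t * (w \<bullet> w) + t^2 * q w"
  proof -
    have s: "w \<bullet> (A *v v) = v \<bullet> (A *v w)" using sym_dot[OF sym] by (metis inner_commute)
    have ww: "w \<bullet> w = w \<bullet> (A *v v) - m * (w \<bullet> v)" by (simp add: w_def inner_diff_right)
    show ?thesis unfolding q_def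
      by (simp add: mv_diff mv_scale inner_diff_left inner_diff_right power2_eq_square
            algebra_simps s ww inner_commute[of w v])
  qed
  moreover have "q v = 0" using z unfolding q_def .
  ultimately have "t^2 * q w \<ge> 2 * t * (w \<bullet> w)" by linarith
  hence "t * q w \<ge> 2 * (w \<bullet> w)" using tpos by (simp add: power2_eq_square) 
  moreover have "t * q w < w \<bullet> w"
    using a qw by (simp add: t_def field_simps)
  ultimately show False using a by linarith
qed



lemma min_eig_sub:
  fixes A :: "real^'n^'n"
  assumes sym: "transpose A = A" and U: "subspace U" and inv: "\<And>x. x \<in> U \<Longrightarrow> A *v x \<in> U"
    and ne: "U \<noteq> {0}"
  shows "\<exists>v\<in>U. norm v = 1 \<and> (\<forall>x\<in>U. norm x = 1 \<longrightarrow> v \<bullet> (A *v v) \<le> x \<bullet> (A *v x))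
           \<and> A *v v = (v \<bullet> (A *v v)) *\<^sub>R v"
proof -
  have cpt: "compact (sphere 0 1 \<inter> U)"
    using compact_Int_closed[OF compact_sphere closed_subspace[OF U]] by simp
  obtain u where u: "u \<in> U" "u \<noteq> 0" using ne U subspace_0 by blast
  have "(1/norm u) *\<^sub>R u \<in> sphere 0 1 \<inter> U" using u U by (simp add: subspace_mul)
  hence nemp: "sphere 0 1 \<inter> U \<noteq> {}" by blast
  have cont: "continuous_on (sphere 0 1 \<inter> U) (\<lambda>x. x \<bullet> (A *v x))"
    by (intro continuous_intros)
  obtain v where v: "v \<in> sphere 0 1 \<inter> U" and vmin: "\<And>y. y \<in> sphere 0 1 \<inter> U \<Longrightarrow> v \<bullet> (A *v v) \<le> y \<bullet> (A *v y)"
    using continuous_attains_inf[OF cpt nemp cont] by blast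
  define m where "m = v \<bullet> (A *v v)"
  have nv: "norm v = 1" "v \<in> U" using v by auto
  have vv: "v \<bullet> v = 1" using nv by (simp add: dot_square_norm)
  have nn: "x \<bullet> (A *v x) - m * (x \<bullet> x) \<ge> 0" if x: "x \<in> U" for x
  proof (cases "x = 0")
    case True thus ?thesis by simp
  next
    case False
    define y where "y = (1/norm x) *\<^sub>R x"
    have "y \<in> sphere 0 1 \<inter> U" using x False U by (simp add: y_def subspace_mul)
    hence "m \<le> y \<bullet> (A *v y)" using vmin m_def by blast
    also have "y \<bullet> (A *v y) = (x \<bullet> (A *v x)) / (norm x)^2"
      by (simp add: y_def mv_scale power2_eq_square)
    finally have "m * (norm x)^2 \<le> x \<bullet> (A *v x)" using False by (simp add: field_simps)
    thus ?thesis by (simp add: dot_square_norm)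
  qed
  have "A *v v = m *\<^sub>R v"
    by (rule psd_kernel[OF sym U nn nv(2)]) (use U inv nv vv m_def in \<open>auto simp: subspace_diff subspace_mul\<close>)
  thus ?thesis using nv vmin m_def by auto
qed

lemma min_eig:
  fixes A :: "real^'n^'n"
  assumes sym: "transpose A = A"
  shows "\<exists>v. norm v = 1 \<and> (\<forall>x. norm x = 1 \<longrightarrow> v \<bullet> (A *v v) \<le> x \<bullet> (A *v x))
           \<and> A *v v = (v \<bullet> (A *v v)) *\<^sub>R v"
proof -
  have "axis (undefined::'n) (1::real) \<noteq> 0" by (auto simp: vec_eq_iff axis_def)
  hence "UNIV \<noteq> ({0} :: (real^'n) set)" by auto
  thus ?thesis using min_eig_sub[OF sym subspace_UNIV] by auto
qed

lemma eig_finite: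
  fixes A :: "real^'n^'n"
  assumes sym: "transpose A = A"
  shows "finite (real_eigenvalues A)"
proof -
  define E where "E = real_eigenvalues A"
  define ev where "ev l = (SOME v. v \<noteq> 0 \<and> A *v v = l *\<^sub>R v)" for l
  have ev: "ev l \<noteq> 0 \<and> A *v ev l = l *\<^sub>R ev l" if "l \<in> E" for l
  proof -
    from that obtain v where "v \<noteq> 0 \<and> A *v v = l *s v" unfolding real_eigenvalues_def E_def by blast
    hence "v \<noteq> 0 \<and> A *v v = l *\<^sub>R v" by (simp add: scalar_mult_eq_scaleR)
    thus ?thesis unfolding ev_def by (rule someI)
  qed
  have injo: "inj_on ev E"
  proof (rule inj_onI)
    fix l k assume l: "l \<in> E" and k: "k \<in> E" and e: "ev l = ev k"
    have "l *\<^sub>R ev l = k *\<^sub>R ev l" using ev[OF l] ev[OF k] e by metis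
    hence "(l - k) *\<^sub>R ev l = 0" by (simp add: algebra_simps)
    thus "l = k" using ev[OF l] by simp
  qed
  have orth: "pairwise orthogonal (ev ` E)"
    unfolding pairwise_def
  proof (intro ballI impI)
    fix x y assume "x \<in> ev ` E" "y \<in> ev ` E" and ne: "x \<noteq> y"
    then obtain l k where l: "l \<in> E" and k: "k \<in> E" and xy: "x = ev l" "y = ev k" by blast
    hence lk: "l \<noteq> k" using ne by auto
    have "(A *v ev l) \<bullet> ev k = ev l \<bullet> (A *v ev k)" by (rule sym_dot[OF sym])
    hence "(l *\<^sub>R ev l) \<bullet> ev k = ev l \<bullet> (k *\<^sub>R ev k)"
      using ev[OF l] ev[OF k] by metis
    hence "l * (ev l \<bullet> ev k) = k * (ev l \<bullet> ev k)" by simp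
    hence "ev l \<bullet> ev k = 0" using lk by simp
    thus "orthogonal x y" by (simp add: orthogonal_def xy)
  qed
  have "0 \<notin> ev ` E" using ev by auto
  hence "finite (ev ` E)"
    using pairwise_orthogonal_independent[OF orth] finiteI_independent by blast
  thus ?thesis using finite_imageD injo E_def by blast
qed

lemma min_eigval:
  fixes A :: "real^'n^'n"
  assumes sym: "transpose A = A"
  obtains v where "norm v = 1" "\<forall>x. norm x = 1 \<longrightarrow> v \<bullet> (A *v v) \<le> x \<bullet> (A *v x)"
     "Min (real_eigenvalues A) = v \<bullet> (A *v v)" "real_eigenvalues A \<noteq> {}"
proof -
  obtain v where v: "norm v = 1" "\<forall>x. norm x = 1 \<longrightarrow> v \<bullet> (A *v v) \<le> x \<bullet> (A *v x)"
    "A *v v = (v \<bullet> (A *v v)) *\<^sub>R v" using min_eig[OF sym] by blast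
  have "v \<noteq> 0" using v(1) by auto
  moreover have "A *v v = (v \<bullet> (A *v v)) *s v" unfolding scalar_mult_eq_scaleR by (rule v(3))
  ultimately have mem: "v \<bullet> (A *v v) \<in> real_eigenvalues A"
    unfolding real_eigenvalues_def by blast
  have lb: "v \<bullet> (A *v v) \<le> l" if "l \<in> real_eigenvalues A" for l
  proof -
    have "l \<in> {l. \<exists>v. v \<noteq> 0 \<and> A *v v = l *s v}" using that by (simp only: real_eigenvalues_def)
    then obtain u where u: "u \<noteq> 0" "A *v u = l *s u" by (rule CollectE) (elim exE conjE)
    have u2: "A *v u = l *\<^sub>R u" using u(2) by (simp only: scalar_mult_eq_scaleR)
    define y where "y = (1/norm u) *\<^sub>R u"
    have "norm y = 1" using u by (simp add: y_def)
    hence "v \<bullet> (A *v v) \<le> y \<bullet> (A *v y)" using v by blast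
    also have "y \<bullet> (A *v y) = (1/norm u)^2 * (u \<bullet> (A *v u))"
      by (simp add: y_def mv_scale power2_eq_square)
    also have "\<dots> = (1/norm u)^2 * (l * (norm u)^2)" by (simp add: u2 dot_square_norm)
    also have "\<dots> = l" using u(1) by (simp add: field_simps)
    finally show ?thesis .
  qed
  have "Min (real_eigenvalues A) = v \<bullet> (A *v v)"
    by (rule Min_eqI[OF eig_finite[OF sym] lb mem])
  thus ?thesis using that v mem by blast
qed


lemma spectral_sub:
  fixes A :: "real^'n^'n"
  assumes sym: "transpose A = A"
  shows "subspace U \<Longrightarrow> (\<And>x. x \<in> U \<Longrightarrow> A *v x \<in> U) \<Longrightarrow>
    \<exists>B. finite B \<and> B \<subseteq> U \<and> pairwise orthogonal B \<and>
        (\<forall>b\<in>B. norm b = 1 \<and> A *v b = (b \<bullet> (A *v b)) *\<^sub>R b) \<and> span B = U"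
proof (induction "dim U" arbitrary: U rule: less_induct)
  case less
  show ?case
  proof (cases "U = {0}")
    case True
    thus ?thesis by (intro exI[of _ "{}"]) auto
  next
    case False
    obtain v where v: "v \<in> U" "norm v = 1" "A *v v = (v \<bullet> (A *v v)) *\<^sub>R v"
      using min_eig_sub[OF sym less.prems False] by blast
    define U' where "U' = {x \<in> U. v \<bullet> x = 0}"
    have sU': "subspace U'" unfolding U'_def using less.prems(1)
      by (auto simp: subspace_def inner_add_right)
    have iU': "A *v x \<in> U'" if "x \<in> U'" for x
    proof -
      have "v \<bullet> (A *v x) = (A *v v) \<bullet> x" using sym_dot[OF sym] by metis
      also have "\<dots> = 0" using that v(3) by (simp add: U'_def) (metis inner_scaleR_left mult_zero_right)
      finally show ?thesis using that less.prems(2) by (simp add: U'_def)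
    qed
    have "v \<notin> U'" using v by (simp add: U'_def dot_square_norm)
    have "U' \<subseteq> U" by (auto simp: U'_def)
    hence ss: "U' \<subset> U" using \<open>v \<notin> U'\<close> v(1) by blast
    have "dim U' < dim U"
      using dim_psubset[of U' U] ss span_eq_iff sU' less.prems(1) by metis
    then obtain B where B: "finite B" "B \<subseteq> U'" "pairwise orthogonal B"
        "\<forall>b\<in>B. norm b = 1 \<and> A *v b = (b \<bullet> (A *v b)) *\<^sub>R b" "span B = U'"
      using less.hyps[OF _ sU' iU'] by blast
    have vB: "v \<notin> B" using B(2) \<open>v \<notin> U'\<close> by blast
    show ?thesis
    proof (intro exI[of _ "insert v B"] conjI)
      show "finite (insert v B)" using B by simp
      show "insert v B \<subseteq> U" using B(2) v U'_def by auto
      show "pairwise orthogonal (insert v B)"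
        using B(2,3) by (auto simp: pairwise_insert U'_def orthogonal_def inner_commute)
      show "\<forall>b\<in>insert v B. norm b = 1 \<and> A *v b = (b \<bullet> (A *v b)) *\<^sub>R b" using B(4) v by auto
      show "span (insert v B) = U"
      proof
        show "span (insert v B) \<subseteq> U"
          using \<open>insert v B \<subseteq> U\<close> less.prems(1) span_minimal by blast
        show "U \<subseteq> span (insert v B)"
        proof
          fix x assume x: "x \<in> U"
          have "x - (v \<bullet> x) *\<^sub>R v \<in> U'" using x v less.prems(1)
            by (auto simp: U'_def subspace_diff subspace_mul inner_diff_right dot_square_norm)
          hence "x - (v \<bullet> x) *\<^sub>R v \<in> span (insert v B)" using B(5) span_mono[of B "insert v B"] by auto
          moreover have "(v \<bullet> x) *\<^sub>R v \<in> span (insert v B)" by (simp add: span_base span_mul)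
          ultimately have "x - (v \<bullet> x) *\<^sub>R v + (v \<bullet> x) *\<^sub>R v \<in> span (insert v B)" by (rule span_add)
          thus "x \<in> span (insert v B)" by simp
        qed
      qed
    qed
  qed
qed

lemma orth_expand:
  assumes fin: "finite B" and orth: "pairwise orthogonal B" and nb: "\<forall>b\<in>B. norm b = 1"
    and x: "x \<in> span B"
  shows "x = (\<Sum>b\<in>B. (b \<bullet> x) *\<^sub>R b)"
proof -
  obtain u where u: "x = (\<Sum>b\<in>B. u b *\<^sub>R b)" using x span_finite[OF fin] by auto
  have "c \<bullet> x = u c" if c: "c \<in> B" for c
  proof -
    have "c \<bullet> x = (\<Sum>b\<in>B. u b * (c \<bullet> b))" by (simp add: u inner_sum_right)
    also have "\<dots> = (\<Sum>b\<in>{c}. u b * (c \<bullet> b))"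
      by (rule sum.mono_neutral_right) (use fin c orth in \<open>auto simp: pairwise_def orthogonal_def\<close>)
    also have "\<dots> = u c" using nb c by (simp add: dot_square_norm)
    finally show ?thesis .
  qed
  thus ?thesis using u by (metis (no_types, lifting) sum.cong)
qed

lemma spectral:
  fixes A :: "real^'n^'n"
  assumes sym: "transpose A = A"
  obtains B where "finite B" "pairwise orthogonal B"
     "\<forall>b\<in>B. norm b = 1 \<and> A *v b = (b \<bullet> (A *v b)) *\<^sub>R b" "\<And>x. x = (\<Sum>b\<in>B. (b \<bullet> x) *\<^sub>R b)"
proof -
  obtain B where B: "finite B" "pairwise orthogonal B"
     "\<forall>b\<in>B. norm b = 1 \<and> A *v b = (b \<bullet> (A *v b)) *\<^sub>R b" "span B = UNIV"
    using spectral_sub[OF sym subspace_UNIV] by blast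
  thus ?thesis using that orth_expand[OF B(1,2)] by auto
qed



lemma coef_extract:
  assumes fin: "finite B" and orth: "pairwise orthogonal B" and nb: "\<forall>b\<in>B. norm b = 1"
    and c: "c \<in> B"
  shows "c \<bullet> (\<Sum>b\<in>B. u b *\<^sub>R b) = u c"
proof -
  have "c \<bullet> (\<Sum>b\<in>B. u b *\<^sub>R b) = (\<Sum>b\<in>B. u b * (c \<bullet> b))" by (simp add: inner_sum_right)
  also have "\<dots> = (\<Sum>b\<in>{c}. u b * (c \<bullet> b))"
    by (rule sum.mono_neutral_right) (use fin c orth in \<open>auto simp: pairwise_def orthogonal_def\<close>)
  also have "\<dots> = u c" using nb c by (simp add: dot_square_norm)
  finally show ?thesis .
qed

lemma sym_from_dot:
  fixes S :: "real^'n^'n"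
  assumes "\<And>x y. (S *v x) \<bullet> y = x \<bullet> (S *v y)"
  shows "transpose S = S"
proof -
  have "transpose S *v y = S *v y" for y
  proof -
    have "x \<bullet> (transpose S *v y) = x \<bullet> (S *v y)" for x
      using assms dot_transpose by metis
    thus ?thesis by (metis vector_eq_ldot)
  qed
  thus ?thesis by (simp add: matrix_eq)
qed

lemma sqrt_exists:
  fixes G :: "real^'n^'n"
  assumes sym: "transpose G = G" and pd: "\<And>x. x \<noteq> 0 \<Longrightarrow> x \<bullet> (G *v x) > 0"
  shows "\<exists>S. pos_def_matrix S \<and> S ** S = G"
proof -
  obtain B where B: "finite B" "pairwise orthogonal B"
     "\<forall>b\<in>B. norm b = 1 \<and> G *v b = (b \<bullet> (G *v b)) *\<^sub>R b" and ex: "\<And>x. x = (\<Sum>b\<in>B. (b \<bullet> x) *\<^sub>R b)"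
    using spectral[OF sym] by blast
  define lam where "lam b = b \<bullet> (G *v b)" for b
  have nb: "\<forall>b\<in>B. norm b = 1" using B(3) by auto
  have Gb: "G *v b = lam b *\<^sub>R b" if "b \<in> B" for b using B(3) that lam_def by auto
  have lpos: "lam b > 0" if "b \<in> B" for b using pd[of b] nb that lam_def by fastforce
  define f where "f x = (\<Sum>b\<in>B. (sqrt (lam b) * (b \<bullet> x)) *\<^sub>R b)" for x
  have lin: "linear f"
    unfolding linear_iff f_def
    by (simp add: inner_add_right sum.distrib scaleR_add_left algebra_simps scaleR_sum_right)
  define S where "S = matrix f"
  have Sf: "S *v x = f x" for x unfolding S_def by (metis matrix_vector_mul(2)[OF lin])
  have coef: "b \<bullet> f x = sqrt (lam b) * (b \<bullet> x)" if "b \<in> B" for b x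
    unfolding f_def by (rule coef_extract[OF B(1,2) nb that])
  have fdot: "f x \<bullet> y = (\<Sum>b\<in>B. sqrt (lam b) * (b \<bullet> x) * (b \<bullet> y))" for x y
    by (simp add: f_def inner_sum_left)
  have symS: "transpose S = S"
    by (rule sym_from_dot) (simp add: Sf fdot inner_commute[of _ "f _"] mult.commute mult.left_commute)
  have SS: "S ** S = G"
  proof (subst matrix_eq, intro allI)
    fix x
    have "(S ** S) *v x = f (f x)" by (simp add: Sf flip: matrix_vector_mul_assoc)
    also have "\<dots> = (\<Sum>b\<in>B. (lam b * (b \<bullet> x)) *\<^sub>R b)"
      unfolding f_def[of "f x"] using lpos
      by (intro sum.cong) (auto simp: coef less_imp_le)
    also have "\<dots> = (\<Sum>b\<in>B. (b \<bullet> x) *\<^sub>R (G *v b))"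
      by (intro sum.cong) (auto simp: Gb)
    also have "\<dots> = G *v (\<Sum>b\<in>B. (b \<bullet> x) *\<^sub>R b)"
      by (simp add: linear_sum[OF matrix_vector_mul_linear] mv_scale)
    also have "\<dots> = G *v x" using ex[of x] by simp
    finally show "(S ** S) *v x = G *v x" .
  qed
  have pdS: "x \<bullet> (S *v x) > 0" if x: "x \<noteq> 0" for x
  proof -
    have "\<exists>b\<in>B. b \<bullet> x \<noteq> 0"
    proof (rule ccontr)
      assume "\<not> ?thesis"
      hence "(\<Sum>b\<in>B. (b \<bullet> x) *\<^sub>R b) = 0" by simp
      thus False using ex[of x] x by simp
    qed
    then obtain c where c: "c \<in> B" "c \<bullet> x \<noteq> 0" by blast
    have "x \<bullet> (S *v x) = (\<Sum>b\<in>B. sqrt (lam b) * (b \<bullet> x) * (b \<bullet> x))"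
      by (simp add: Sf fdot inner_commute[of x])
    also have "\<dots> > 0"
    proof (rule sum_pos2[OF B(1) c(1)])
      have "(c \<bullet> x) * (c \<bullet> x) > 0" using c(2) by (metis not_real_square_gt_zero)
      thus "0 < sqrt (lam c) * (c \<bullet> x) * (c \<bullet> x)" using lpos[OF c(1)]
        by (simp add: mult.assoc)
      show "\<And>i. i \<in> B \<Longrightarrow> 0 \<le> sqrt (lam i) * (i \<bullet> x) * (i \<bullet> x)"
        using lpos by (simp add: mult.assoc less_imp_le)
    qed
    finally show ?thesis .
  qed
  show ?thesis using symS pdS SS unfolding pos_def_matrix_def by blast
qed



lemma sym_diff: "transpose S = S \<Longrightarrow> transpose R = R \<Longrightarrow> transpose (S - R) = (S - R :: real^'n^'n)"
  by (rule sym_from_dot) (simp add: matrix_vector_mult_diff_rdistrib inner_diff_left inner_diff_right sym_dot)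

lemma sqrt_half:
  fixes S R :: "real^'n^'n"
  assumes S: "pos_def_matrix S" and R: "pos_def_matrix R" and eq: "S ** S = R ** R"
  shows "x \<bullet> ((S - R) *v x) \<ge> 0"
proof -
  define D where "D = S - R"
  have sS: "transpose S = S" and sR: "transpose R = R" using S R by (auto simp: pos_def_matrix_def)
  have sD: "transpose D = D" unfolding D_def using sym_diff[OF sS sR] .
  obtain v where v: "norm v = 1" "\<forall>x. norm x = 1 \<longrightarrow> v \<bullet> (D *v v) \<le> x \<bullet> (D *v x)"
    "D *v v = (v \<bullet> (D *v v)) *\<^sub>R v" using min_eig[OF sD] by blast
  define \<mu> where "\<mu> = v \<bullet> (D *v v)"
  have Dv: "D *v v = \<mu> *\<^sub>R v" using v(3) \<mu>_def by simp
  have "S *v (D *v v) + D *v (R *v v) = (S ** S) *v v - (R ** R) *v v"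
    by (simp add: D_def matrix_vector_mult_diff_rdistrib mv_diff flip: matrix_vector_mul_assoc)
  hence "S *v (D *v v) + D *v (R *v v) = 0" using eq by simp
  hence "v \<bullet> (S *v (D *v v)) + v \<bullet> (D *v (R *v v)) = 0"
    by (metis inner_add_right inner_zero_right)
  moreover have "v \<bullet> (D *v (R *v v)) = \<mu> * (v \<bullet> (R *v v))"
    using sym_dot[OF sD, of v "R *v v"] Dv by simp
  moreover have "v \<bullet> (S *v (D *v v)) = \<mu> * (v \<bullet> (S *v v))" by (simp add: Dv mv_scale)
  ultimately have "\<mu> * (v \<bullet> (S *v v) + v \<bullet> (R *v v)) = 0" by (simp add: algebra_simps)
  moreover have "v \<noteq> 0" using v(1) by auto
  hence "v \<bullet> (S *v v) > 0" "v \<bullet> (R *v v) > 0" using S R unfolding pos_def_matrix_def by blast+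
  ultimately have mu0: "\<mu> = 0" by simp
  show ?thesis
  proof (cases "x = 0")
    case True thus ?thesis by simp
  next
    case False
    define y where "y = (1/norm x) *\<^sub>R x"
    have "norm y = 1" using False by (simp add: y_def)
    hence "0 \<le> y \<bullet> (D *v y)" using v(2) mu0 \<mu>_def by metis
    also have "y \<bullet> (D *v y) = (1/norm x)^2 * (x \<bullet> (D *v x))" by (simp add: y_def mv_scale power2_eq_square)
    finally show ?thesis using False by (simp add: D_def zero_le_mult_iff)
  qed
qed

lemma sqrt_unique:
  fixes S R :: "real^'n^'n"
  assumes S: "pos_def_matrix S" and R: "pos_def_matrix R" and eq: "S ** S = R ** R"
  shows "S = R"
proof -
  have sS: "transpose S = S" and sR: "transpose R = R" using S R by (auto simp: pos_def_matrix_def)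
  have h1: "x \<bullet> ((S - R) *v x) \<ge> 0" for x using sqrt_half[OF S R eq] .
  have h2: "x \<bullet> ((R - S) *v x) \<ge> 0" for x using sqrt_half[OF R S eq[symmetric]] .
  have z: "x \<bullet> ((S - R) *v x) = 0" for x
  proof -
    have "x \<bullet> ((R - S) *v x) = - (x \<bullet> ((S - R) *v x))"
      by (simp add: matrix_vector_mult_diff_rdistrib inner_diff_right)
    thus ?thesis using h1[of x] h2[of x] by linarith
  qed
  have "(S - R) *v v = 0 *\<^sub>R v" for v
    by (rule psd_kernel[OF sym_diff[OF sS sR] subspace_UNIV]) (use z in auto)
  hence "S *v v = R *v v" for v by (simp add: matrix_vector_mult_diff_rdistrib)
  thus ?thesis by (simp add: matrix_eq)
qed

lemma mat_sqrt_props: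
  fixes G :: "real^'n^'n"
  assumes sym: "transpose G = G" and pd: "\<And>x. x \<noteq> 0 \<Longrightarrow> x \<bullet> (G *v x) > 0"
  shows "pos_def_matrix (mat_sqrt G) \<and> mat_sqrt G ** mat_sqrt G = G"
proof -
  obtain S where S: "pos_def_matrix S \<and> S ** S = G" using sqrt_exists[OF sym pd] by blast
  have "\<exists>!S. pos_def_matrix S \<and> S ** S = G"
    using S sqrt_unique by metis
  thus ?thesis unfolding mat_sqrt_def by (rule theI')
qed

lemma orth_props:
  fixes Q :: "real^'s^'d"
  assumes "orthonormal_cols Q"
  shows "(Q *v x) \<bullet> (Q *v y) = x \<bullet> y" "norm (Q *v x) = norm x"
proof -
  show e: "(Q *v x) \<bullet> (Q *v y) = x \<bullet> y" for x y
    using assms unfolding orthonormal_cols_def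
    by (metis dot_transpose matrix_vector_mul_assoc matrix_vector_mul_lid)
  show "norm (Q *v x) = norm x"
    using e[of x x] by (metis norm_eq_sqrt_inner)
qed

lemma gen_lemma:
  fixes W :: "real^'s^'d"
  assumes inj: "inj ((*v) W)"
  defines "S \<equiv> mat_sqrt (transpose W ** W)"
  defines "K \<equiv> matrix_inv S"
  shows "pos_def_matrix S" "S ** S = transpose W ** W" "S ** K = mat 1" "K ** S = mat 1"
    "\<And>z. norm (W *v z) = norm (S *v z)" "\<And>x. norm (W *v (K *v x)) = norm x"
    "orthonormal_cols (W ** K)" "col_space (W ** K) = col_space W"
proof -
  define G where "G = transpose W ** W"
  have sG: "transpose G = G" by (simp add: G_def matrix_transpose_mul)
  have Gd: "x \<bullet> (G *v x) = (W *v x) \<bullet> (W *v x)" for x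
    by (simp add: G_def dot_transpose flip: matrix_vector_mul_assoc)
  have pd: "x \<bullet> (G *v x) > 0" if "x \<noteq> 0" for x
  proof -
    have "W *v x \<noteq> 0" using inj that by (metis injD matrix_vector_mult_0_right)
    thus ?thesis using Gd by simp
  qed
  have SP: "pos_def_matrix S \<and> S ** S = G" using mat_sqrt_props[OF sG pd] S_def G_def by simp
  thus S1: "pos_def_matrix S" and S2: "S ** S = transpose W ** W" using G_def by auto
  have sS: "transpose S = S" using S1 by (simp add: pos_def_matrix_def)
  have injS: "inj ((*v) S)"
  proof (rule injI)
    fix x y assume "S *v x = S *v y"
    hence "S *v (x - y) = 0" by (simp add: mv_diff)
    hence "(x - y) \<bullet> (S *v (x - y)) = 0" by simp
    thus "x = y" using S1 unfolding pos_def_matrix_def by (metis less_irrefl right_minus_eq)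
  qed
  hence "invertible S" using matrix_left_invertible_injective invertible_left_inverse by blast
  hence "S ** K = mat 1 \<and> K ** S = mat 1"
    unfolding K_def matrix_inv_def invertible_def by (rule someI_ex)
  thus SK: "S ** K = mat 1" and KS: "K ** S = mat 1" by auto
  show nWS: "norm (W *v z) = norm (S *v z)" for z
  proof -
    have "(W *v z) \<bullet> (W *v z) = z \<bullet> (G *v z)" using Gd by simp
    also have "\<dots> = z \<bullet> (S *v (S *v z))" using SP by (simp add: matrix_vector_mul_assoc)
    also have "\<dots> = (S *v z) \<bullet> (S *v z)" using sym_dot[OF sS] by simp
    finally show ?thesis by (metis norm_eq_sqrt_inner)
  qed
  show "norm (W *v (K *v x)) = norm x" for x
    using nWS[of "K *v x"] SK by (simp add: matrix_vector_mul_assoc)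
  have KtS: "transpose K ** S = mat 1"
    using SK sS by (metis matrix_transpose_mul transpose_mat)
  have "transpose (W ** K) ** (W ** K) = transpose K ** (transpose W ** W) ** K"
    by (simp add: matrix_transpose_mul matrix_mul_assoc)
  also have "\<dots> = transpose K ** (S ** S) ** K" using S2 by simp
  also have "\<dots> = (transpose K ** S) ** (S ** K)" by (simp add: matrix_mul_assoc)
  also have "\<dots> = mat 1" using KtS SK by simp
  finally show "orthonormal_cols (W ** K)" unfolding orthonormal_cols_def .
  show "col_space (W ** K) = col_space W"
  proof
    show "col_space (W ** K) \<subseteq> col_space W"
      unfolding col_space_def by (auto simp flip: matrix_vector_mul_assoc)
    show "col_space W \<subseteq> col_space (W ** K)"
    proof
      fix y assume "y \<in> col_space W"
      then obtain z where z: "y = W *v z" unfolding col_space_def by auto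
      have "y = (W ** K) *v (S *v z)" using KS z by (simp add: matrix_vector_mul_assoc flip: matrix_mul_assoc)
      thus "y \<in> col_space (W ** K)" unfolding col_space_def by auto
    qed
  qed
qed

lemma onb_exists:
  fixes W :: "real^'s^'d"
  assumes inj: "inj ((*v) W)"
  shows "orthonormal_cols (onb_matrix TYPE('s) (col_space W)) \<and>
         col_space (onb_matrix TYPE('s) (col_space W)) = col_space W"
proof -
  have "\<exists>P::real^'s^'d. orthonormal_cols P \<and> col_space P = col_space W"
    using gen_lemma(7,8)[OF inj] by blast
  thus ?thesis unfolding onb_matrix_def by (rule someI_ex)
qed



lemma proj_split:
  fixes P :: "real^'s^'d"
  assumes P: "orthonormal_cols P"
  shows "(norm (transpose P *v x))^2 + (norm (x - P *v (transpose P *v x)))^2 = (norm x)^2"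
proof -
  define u where "u = transpose P *v x"
  have xPu: "x \<bullet> (P *v u) = u \<bullet> u" using dot_transpose[of P u x] by (simp add: u_def inner_commute)
  have "(norm (x - P *v u))^2 = x \<bullet> x - 2 * (x \<bullet> (P *v u)) + (P *v u) \<bullet> (P *v u)"
    by (simp add: power2_norm_eq_inner inner_diff_left inner_diff_right inner_commute)
  also have "\<dots> = x \<bullet> x - u \<bullet> u" using xPu orth_props(1)[OF P] by simp
  finally show ?thesis by (simp add: u_def power2_norm_eq_inner)
qed

lemma angle_eq:
  fixes P Q :: "real^'s^'d"
  assumes P: "orthonormal_cols P" and Q: "orthonormal_cols Q"
  shows "arccos (Min (singular_values (transpose P ** Q))) =
         arcsin (spec_norm ((mat 1 - P ** transpose P) ** Q))"
    "spec_norm ((mat 1 - P ** transpose P) ** Q) \<le> 1"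
proof -
  define A where "A = transpose P ** Q"
  define M where "M = (mat 1 - P ** transpose P) ** Q"
  define C where "C = transpose A ** A"
  have sC: "transpose C = C" by (simp add: C_def matrix_transpose_mul)
  have Mv: "M *v y = Q *v y - P *v (transpose P *v (Q *v y))" for y
    by (simp add: M_def matrix_vector_mult_diff_rdistrib flip: matrix_vector_mul_assoc)
  have Av: "A *v y = transpose P *v (Q *v y)" for y by (simp add: A_def flip: matrix_vector_mul_assoc)
  have yC: "y \<bullet> (C *v y) = (norm (A *v y))^2" for y
    by (simp add: C_def dot_transpose power2_norm_eq_inner flip: matrix_vector_mul_assoc)
  have split: "(norm (A *v y))^2 + (norm (M *v y))^2 = (norm y)^2" for y
    using proj_split[OF P, of "Q *v y"] orth_props(2)[OF Q] by (simp add: Av Mv)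
  obtain v where v: "norm v = 1" "\<forall>x. norm x = 1 \<longrightarrow> v \<bullet> (C *v v) \<le> x \<bullet> (C *v x)"
     "Min (real_eigenvalues C) = v \<bullet> (C *v v)" "real_eigenvalues C \<noteq> {}"
    using min_eigval[OF sC] by blast
  have minC: "Min (real_eigenvalues C) = 1 - (norm (M *v v))^2" using v(1,3) yC split[of v] by simp
  have bnd: "norm (M *v y) \<le> norm (M *v v) * norm y" for y
  proof (cases "y = 0")
    case True thus ?thesis by simp
  next
    case False
    define y' where "y' = (1/norm y) *\<^sub>R y"
    have ny: "norm y' = 1" using False by (simp add: y'_def)
    hence "v \<bullet> (C *v v) \<le> y' \<bullet> (C *v y')" using v(2) by blast
    hence "1 - (norm (M *v v))^2 \<le> 1 - (norm (M *v y'))^2" using yC split ny v(1)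
      by (metis add_diff_cancel_right' power_one)
    hence "(norm (M *v y'))^2 \<le> (norm (M *v v))^2" by simp
    hence "norm (M *v y') \<le> norm (M *v v)" by (simp add: power_mono_iff)
    moreover have "M *v y' = (1/norm y) *\<^sub>R (M *v y)" by (simp add: y'_def mv_scale)
    ultimately have "norm (M *v y) / norm y \<le> norm (M *v v)" by simp
    thus ?thesis using False by (simp add: field_simps)
  qed
  have nu: "spec_norm M = norm (M *v v)"
  proof (rule antisym)
    show "spec_norm M \<le> norm (M *v v)" unfolding spec_norm_def
      by (rule onorm_le) (rule bnd)
    show "norm (M *v v) \<le> spec_norm M"
      using onorm[OF matrix_vector_mul_bounded_linear, of M v] v(1) unfolding spec_norm_def by simp
  qed
  have le1: "norm (M *v v) \<le> 1"
  proof -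
    have "(norm (M *v v))^2 \<le> 1" using split[of v] v(1) by (metis le_add_same_cancel2 power_one zero_le_power2)
    thus ?thesis by (simp add: power_le_one_iff)
  qed
  thus "spec_norm ((mat 1 - P ** transpose P) ** Q) \<le> 1" using nu M_def by simp
  have fin: "finite (real_eigenvalues C)" by (rule eig_finite[OF sC])
  have n0: "0 \<le> spec_norm M" unfolding spec_norm_def by (rule onorm_pos_le) simp
  have n1: "spec_norm M \<le> 1" using le1 nu by simp
  have "Min (singular_values A) = sqrt (Min (real_eigenvalues C))"
    unfolding singular_values_def C_def[symmetric]
    using fin v(4) by (intro mono_Min_commute[symmetric]) (auto intro: monoI)
  also have "\<dots> = sqrt (1 - (spec_norm M)^2)" using minC nu by simp
  also have "\<dots> = cos (arcsin (spec_norm M))"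
    by (rule cos_arcsin[symmetric]) (use n0 n1 in auto)
  finally have "arccos (Min (singular_values A)) = arccos (cos (arcsin (spec_norm M)))" by simp
  also have "\<dots> = arcsin (spec_norm M)"
  proof (rule arccos_cos)
    show "0 \<le> arcsin (spec_norm M)" using n0 n1 by (intro arcsin_nonneg) auto
    have "arcsin (spec_norm M) \<le> pi/2" using n0 n1 by (intro arcsin_ubound) auto
    thus "arcsin (spec_norm M) \<le> pi" using pi_gt_zero by linarith
  qed
  finally show "arccos (Min (singular_values (transpose P ** Q))) =
         arcsin (spec_norm ((mat 1 - P ** transpose P) ** Q))" using A_def M_def by simp
qed

lemma orth_proj_eq:
  fixes P :: "real^'s^'d"
  assumes P: "orthonormal_cols P"
  shows "orth_proj (col_space P) x = P *v (transpose P *v x)"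
proof -
  have ok: "(x - P *v (transpose P *v x)) \<bullet> v = 0" if vin: "v \<in> col_space P" for v
  proof -
    obtain z where z: "v = P *v z" using vin unfolding col_space_def by blast
    have "x \<bullet> (P *v z) = (transpose P *v x) \<bullet> z" using dot_transpose[of P z x] by (simp add: inner_commute)
    moreover have "(P *v (transpose P *v x)) \<bullet> (P *v z) = (transpose P *v x) \<bullet> z" by (rule orth_props(1)[OF P])
    ultimately show ?thesis by (simp add: z inner_diff_left)
  qed
  have mem: "P *v (transpose P *v x) \<in> col_space P" unfolding col_space_def by auto
  show ?thesis unfolding orth_proj_def
  proof (rule the_equality)
    show "P *v (transpose P *v x) \<in> col_space P \<and> (\<forall>v\<in>col_space P. (x - P *v (transpose P *v x)) \<bullet> v = 0)"
      using mem ok by blast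
    fix y assume y: "y \<in> col_space P \<and> (\<forall>v\<in>col_space P. (x - y) \<bullet> v = 0)"
    obtain a where a: "y = P *v a" using y unfolding col_space_def by blast
    have sub: "y - P *v (transpose P *v x) \<in> col_space P"
      unfolding col_space_def a mv_diff[symmetric] by (rule rangeI)
    define p where "p = P *v (transpose P *v x)"
    have e1: "(x - y) \<bullet> (y - p) = 0" using y sub p_def by blast
    have e2: "(x - p) \<bullet> (y - p) = 0" using ok sub p_def by blast
    have "(y - p) = (x - p) - (x - y)" by simp
    hence "(y - p) \<bullet> (y - p) = (x - p) \<bullet> (y - p) - (x - y) \<bullet> (y - p)"
      by (metis inner_diff_left)
    hence "(y - p) \<bullet> (y - p) = 0" using e1 e2 by simp
    hence "y = p" by simp
    thus "y = P *v (transpose P *v x)" using p_def by simp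
  qed
qed

lemma proj_matrix:
  fixes P :: "real^'s^'d"
  assumes P: "orthonormal_cols P"
  shows "(\<chi> i j. orth_proj (col_space P) (axis j 1) $ i) = P ** transpose P"
proof -
  have "(\<chi> i j. orth_proj (col_space P) (axis j 1) $ i) = matrix (\<lambda>x. (P ** transpose P) *v x)"
    unfolding matrix_def orth_proj_eq[OF P] matrix_vector_mul_assoc by (rule refl)
  thus ?thesis by simp
qed



lemma mat_bound: "norm ((A::real^'n^'m) *v z) \<le> (\<Sum>i\<in>UNIV. \<Sum>j\<in>UNIV. \<bar>A $ i $ j\<bar>) * norm z"
proof -
  have "norm (A *v z) \<le> onorm ((*v) A) * norm z" by (rule onorm) simp
  also have "\<dots> \<le> (\<Sum>i\<in>UNIV. \<Sum>j\<in>UNIV. \<bar>A $ i $ j\<bar>) * norm z"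
    by (rule mult_right_mono[OF onorm_le_matrix_component_sum]) simp
  finally show ?thesis .
qed

lemma spec_bound: "norm ((A::real^'n^'m) *v z) \<le> spec_norm A * norm z"
  unfolding spec_norm_def by (rule onorm) simp

lemma spec_nonneg: "0 \<le> spec_norm (A::real^'n^'m)"
  unfolding spec_norm_def by (rule onorm_pos_le) simp

lemma spec_le: "(\<And>z. norm ((A::real^'n^'m) *v z) \<le> b * norm z) \<Longrightarrow> spec_norm A \<le> b"
  unfolding spec_norm_def by (rule onorm_le)

lemma Dt_eq:
  fixes Wt W0 W' :: "real^'s^'d"
  assumes h: "h > 0" and E: "E = (1/h) *\<^sub>R (Wt - W0) - W'"
  shows "Wt *v z = W0 *v z + h *\<^sub>R (W' *v z + E *v z)"
proof -
  have "W' + E = (1/h) *\<^sub>R (Wt - W0)" using E by simp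
  hence "h *\<^sub>R (W' + E) = Wt - W0" using h by simp
  hence "h *\<^sub>R ((W' + E) *v z) = Wt *v z - W0 *v z"
    by (metis scaleR_matrix_vector_assoc matrix_vector_mult_diff_rdistrib)
  thus ?thesis by (simp add: matrix_vector_mult_add_rdistrib algebra_simps)
qed

lemma upper_bound:
  fixes W0 Wt W' Q E :: "real^'s^'d" and Pp :: "real^'d^'d" and K S :: "real^'s^'s"
  assumes h: "h > 0" and Q: "orthonormal_cols Q" and cs: "col_space Q = col_space Wt"
    and pp3: "\<And>z. Pp *v (W0 *v z) = 0" and pp2: "\<And>x. norm (Pp *v x) \<le> norm x"
    and KS: "K ** S = mat 1" and WS: "\<And>z. norm (W0 *v z) = norm (S *v z)"
    and cz: "\<And>z. norm z \<le> c * norm (W0 *v z)"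
    and bD: "\<And>z. norm ((Wt - W0) *v z) \<le> \<beta> * norm z"
    and bE: "\<And>z. norm (E *v z) \<le> \<eta> * norm z"
    and E: "E = (1/h) *\<^sub>R (Wt - W0) - W'" and bc: "\<beta> * c < 1" and c0: "c \<ge> 0" and eta0: "\<eta> \<ge> 0"
    and b0: "\<beta> \<ge> 0"
  shows "spec_norm (Pp ** Q) \<le> h * (spec_norm (Pp ** W' ** K) + \<eta> * c) / (1 - \<beta> * c)"
proof (rule spec_le)
  fix y
  define N where "N = spec_norm (Pp ** W' ** K)"
  have N0: "N \<ge> 0" unfolding N_def by (rule spec_nonneg)
  have "Q *v y \<in> col_space Wt" using cs unfolding col_space_def by blast
  then obtain z where z: "Q *v y = Wt *v z" unfolding col_space_def by blast
  have ny: "norm (Wt *v z) = norm y" using z orth_props(2)[OF Q] by metis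
  have Wt: "Wt *v z = W0 *v z + h *\<^sub>R (W' *v z + E *v z)" by (rule Dt_eq[OF h E])
  have "Pp *v (Wt *v z) = h *\<^sub>R (Pp *v (W' *v z) + Pp *v (E *v z))"
    unfolding Wt by (simp add: mv_add pp3 mv_scale)
  hence a0: "norm (Pp *v (Q *v y)) = h * norm (Pp *v (W' *v z) + Pp *v (E *v z))"
    using z h by simp
  have a1: "norm (Pp *v (W' *v z) + Pp *v (E *v z)) \<le> norm (Pp *v (W' *v z)) + norm (E *v z)"
    using pp2[of "E *v z"] norm_triangle_ineq[of "Pp *v (W' *v z)" "Pp *v (E *v z)"] by linarith
  have a2: "norm (Pp *v (W' *v z)) \<le> N * norm (W0 *v z)"
  proof -
    have "Pp *v (W' *v z) = (Pp ** W' ** K) *v (S *v z)"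
      by (simp add: matrix_vector_mul_assoc KS flip: matrix_mul_assoc)
    thus ?thesis using spec_bound[of "Pp ** W' ** K" "S *v z"] WS N_def by simp
  qed
  have a3: "norm (E *v z) \<le> \<eta> * (c * norm (W0 *v z))"
    using bE[of z] mult_left_mono[OF cz[of z] eta0] by linarith
  have "norm (Pp *v (W' *v z) + Pp *v (E *v z)) \<le> (N + \<eta> * c) * norm (W0 *v z)"
    using a1 a2 a3 by (simp add: algebra_simps)
  hence A: "norm (Pp *v (Q *v y)) \<le> h * (N + \<eta> * c) * norm (W0 *v z)"
    unfolding a0 using h by (simp add: mult.assoc mult_left_mono)
  have "W0 *v z = Wt *v z - (Wt - W0) *v z" by (simp add: matrix_vector_mult_diff_rdistrib)
  hence b1: "norm (W0 *v z) \<le> norm (Wt *v z) + norm ((Wt - W0) *v z)"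
    using norm_triangle_ineq4[of "Wt *v z" "(Wt - W0) *v z"] by simp
  have b2: "norm ((Wt - W0) *v z) \<le> \<beta> * (c * norm (W0 *v z))"
    using bD[of z] mult_left_mono[OF cz[of z] b0] by linarith
  have "norm (W0 *v z) \<le> norm y + \<beta> * (c * norm (W0 *v z))" using b1 b2 ny by linarith
  hence "(1 - \<beta> * c) * norm (W0 *v z) \<le> norm y" by (simp add: algebra_simps)
  hence B: "norm (W0 *v z) \<le> norm y / (1 - \<beta> * c)" using bc by (simp add: field_simps)
  have hN: "h * (N + \<eta> * c) \<ge> 0" using h N0 eta0 c0 by simp
  have "norm ((Pp ** Q) *v y) = norm (Pp *v (Q *v y))" by (simp add: matrix_vector_mul_assoc)
  also have "\<dots> \<le> h * (N + \<eta> * c) * (norm y / (1 - \<beta> * c))"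
    using A mult_left_mono[OF B hN] by linarith
  also have "\<dots> = h * (N + \<eta> * c) / (1 - \<beta> * c) * norm y" by simp
  finally show "norm ((Pp ** Q) *v y) \<le> h * (spec_norm (Pp ** W' ** K) + \<eta> * c) / (1 - \<beta> * c) * norm y"
    unfolding N_def .
qed

lemma lower_bound:
  fixes W0 Wt W' Q E :: "real^'s^'d" and Pp :: "real^'d^'d" and K S :: "real^'s^'s"
  assumes h: "h > 0" and Q: "orthonormal_cols Q" and cs: "col_space Q = col_space Wt"
    and pp3: "\<And>z. Pp *v (W0 *v z) = 0" and pp2: "\<And>x. norm (Pp *v x) \<le> norm x"
    and WK: "\<And>x. norm (W0 *v (K *v x)) = norm x"
    and cz: "\<And>z. norm z \<le> c * norm (W0 *v z)"
    and bD: "\<And>z. norm ((Wt - W0) *v z) \<le> \<beta> * norm z"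
    and bE: "\<And>z. norm (E *v z) \<le> \<eta> * norm z"
    and E: "E = (1/h) *\<^sub>R (Wt - W0) - W'" and c0: "c \<ge> 0" and eta0: "\<eta> \<ge> 0" and b0: "\<beta> \<ge> 0"
  shows "spec_norm (Pp ** W' ** K) \<le> spec_norm (Pp ** Q) / h * (1 + \<beta> * c) + \<eta> * c"
proof (rule spec_le)
  fix x
  define nu where "nu = spec_norm (Pp ** Q)"
  have nu0: "nu \<ge> 0" unfolding nu_def by (rule spec_nonneg)
  define z where "z = K *v x"
  have nx: "norm (W0 *v z) = norm x" using WK z_def by simp
  have "Wt *v z \<in> col_space Q" using cs unfolding col_space_def by blast
  then obtain y where y: "Wt *v z = Q *v y" unfolding col_space_def by blast
  have ny: "norm y = norm (Wt *v z)" using y orth_props(2)[OF Q] by metis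
  have "Wt *v z = W0 *v z + (Wt - W0) *v z" by (simp add: matrix_vector_mult_diff_rdistrib)
  hence b1: "norm (Wt *v z) \<le> norm (W0 *v z) + norm ((Wt - W0) *v z)"
    using norm_triangle_ineq[of "W0 *v z" "(Wt - W0) *v z"] by simp
  have b2: "norm ((Wt - W0) *v z) \<le> \<beta> * (c * norm x)"
    using bD[of z] mult_left_mono[OF cz[of z] b0] nx by simp
  have "norm (Wt *v z) \<le> norm x + \<beta> * (c * norm x)" using b1 b2 nx by linarith
  hence nyb: "norm y \<le> (1 + \<beta> * c) * norm x" using ny by (simp add: algebra_simps)
  have Wt: "Wt *v z = W0 *v z + h *\<^sub>R (W' *v z + E *v z)" by (rule Dt_eq[OF h E])
  have "Pp *v (Wt *v z) = h *\<^sub>R (Pp *v (W' *v z) + Pp *v (E *v z))"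
    unfolding Wt by (simp add: mv_add pp3 mv_scale)
  hence peq: "Pp *v (W' *v z) = (1/h) *\<^sub>R (Pp *v (Q *v y)) - Pp *v (E *v z)"
    using h y by (simp add: algebra_simps)
  have "norm (Pp *v (W' *v z)) \<le> norm ((1/h) *\<^sub>R (Pp *v (Q *v y))) + norm (Pp *v (E *v z))"
    unfolding peq by (rule norm_triangle_ineq4)
  hence a1: "norm (Pp *v (W' *v z)) \<le> (1/h) * norm (Pp *v (Q *v y)) + norm (Pp *v (E *v z))"
    using h by simp
  have a2: "norm (Pp *v (Q *v y)) \<le> nu * norm y"
    using spec_bound[of "Pp ** Q" y] nu_def by (simp add: matrix_vector_mul_assoc)
  have a3: "norm (Pp *v (E *v z)) \<le> \<eta> * (c * norm x)"
  proof -
    have "norm (Pp *v (E *v z)) \<le> \<eta> * norm z" using pp2[of "E *v z"] bE[of z] by linarith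
    also have "\<dots> \<le> \<eta> * (c * norm x)" using cz[of z] nx eta0 by (simp add: mult_left_mono)
    finally show ?thesis .
  qed
  have a4: "nu * norm y \<le> nu * ((1 + \<beta> * c) * norm x)"
    using nyb nu0 by (simp add: mult_left_mono)
  have a5: "(1/h) * norm (Pp *v (Q *v y)) \<le> (1/h) * (nu * ((1 + \<beta> * c) * norm x))"
    using a2 a4 h by (intro mult_left_mono) auto
  have "norm (Pp *v (W' *v z)) \<le> (1/h) * (nu * ((1 + \<beta> * c) * norm x)) + \<eta> * (c * norm x)"
    using a1 a3 a5 by linarith
  hence "norm (Pp *v (W' *v z)) \<le> (nu / h * (1 + \<beta> * c) + \<eta> * c) * norm x"
    by (simp add: algebra_simps)
  moreover have "(Pp ** W' ** K) *v x = Pp *v (W' *v z)"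
    by (simp add: z_def matrix_vector_mul_assoc matrix_mul_assoc)
  ultimately show "norm ((Pp ** W' ** K) *v x) \<le> (spec_norm (Pp ** Q) / h * (1 + \<beta> * c) + \<eta> * c) * norm x"
    unfolding nu_def by (simp only:)
qed



lemma arcsin_ratio_cont: "isCont (\<lambda>x::real. if x = 0 then 1 else arcsin x / x) 0"
proof -
  have "(arcsin has_real_derivative inverse (sqrt (1 - 0\<^sup>2))) (at 0)"
    by (rule DERIV_arcsin) auto
  hence "(arcsin has_real_derivative 1) (at 0)" by simp
  hence "((\<lambda>y. (arcsin y - arcsin 0) / (y - 0)) \<longlongrightarrow> 1) (at 0)"
    by (simp add: has_field_derivative_iff)
  hence lim: "((\<lambda>y. arcsin y / y) \<longlongrightarrow> 1) (at 0)" by simp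
  have "((\<lambda>x::real. if x = 0 then 1 else arcsin x / x) \<longlongrightarrow> 1) (at 0)"
    by (rule Lim_transform_within[OF lim zero_less_one]) auto
  thus ?thesis unfolding isCont_def by simp
qed

lemma filt:
  assumes "\<tau> \<in> {0..<T}" "(f \<longlongrightarrow> l) (at \<tau> within {0..<T})"
  shows "(f \<longlongrightarrow> l) (at_right (\<tau>::real))"
proof -
  have "at \<tau> within {\<tau><..} = at \<tau> within ({0..<T} \<inter> {\<tau><..})"
    by (rule at_within_nhd[of _ "{..<T}"]) (use assms(1) in auto)
  thus ?thesis using tendsto_within_subset[OF assms(2), of "{0..<T} \<inter> {\<tau><..}"] by auto
qed

lemma comp_sum_tendsto:
  assumes "(E \<longlongrightarrow> 0) F"
  shows "((\<lambda>t. \<Sum>i\<in>UNIV. \<Sum>j\<in>UNIV. \<bar>(E t :: real^'n^'m) $ i $ j\<bar>) \<longlongrightarrow> 0) F"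
proof -
  have "((\<lambda>t. \<bar>E t $ i $ j\<bar>) \<longlongrightarrow> \<bar>(0::real^'n^'m) $ i $ j\<bar>) F" for i j
    by (intro tendsto_intros assms)
  hence "((\<lambda>t. \<Sum>i\<in>UNIV. \<Sum>j\<in>UNIV. \<bar>E t $ i $ j\<bar>) \<longlongrightarrow> (\<Sum>i\<in>(UNIV::'m set). \<Sum>j\<in>(UNIV::'n set). \<bar>(0::real^'n^'m) $ i $ j\<bar>)) F"
    by (intro tendsto_sum) auto
  thus ?thesis by simp
qed

lemma comp_sum_nonneg: "0 \<le> (\<Sum>i\<in>UNIV. \<Sum>j\<in>UNIV. \<bar>(A :: real^'n^'m) $ i $ j\<bar>)"
  by (intro sum_nonneg) auto

theorem theorem3p5:
  fixes W W' :: "real \<Rightarrow> real^'s^'d" and T :: real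
  assumes "T > 0"
    and "\<And>t. t \<in> {0..<T} \<Longrightarrow> (W has_vector_derivative W' t) (at t within {0..<T})"
    and "continuous_on {0..<T} W'"
    and "\<And>t. t \<in> {0..<T} \<Longrightarrow> rank (W t) = CARD('s)"
    and "\<tau> \<in> {0..<T}"
  shows "((\<lambda>t. max_principal_angle TYPE('s) (col_space (W \<tau>)) (col_space (W t)))
           has_real_derivative
           spec_norm ((mat 1 - (\<chi> i j. orth_proj (col_space (W \<tau>)) (axis j 1) $ i)) ** W' \<tau>
                      ** matrix_inv (mat_sqrt (transpose (W \<tau>) ** W \<tau>))))
         (at_right \<tau>)"
proof -
  have tau: "\<tau> \<in> {0..<T}" by fact
  have injW: "inj ((*v) (W t))" if "t \<in> {0..<T}" for t
    using assms(4)[OF that] full_rank_injective by blast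
  define V0 where "V0 = col_space (W \<tau>)"
  define P where "P = onb_matrix TYPE('s) V0"
  have P: "orthonormal_cols P" "col_space P = V0"
    using onb_exists[OF injW[OF tau]] unfolding P_def V0_def by auto
  define Pp where "Pp = mat 1 - P ** transpose P"
  have projm: "(\<chi> i j. orth_proj V0 (axis j 1) $ i) = P ** transpose P"
    using proj_matrix[OF P(1)] P(2) by simp
  have Ppv: "Pp *v x = x - P *v (transpose P *v x)" for x
    by (simp add: Pp_def matrix_vector_mult_diff_rdistrib flip: matrix_vector_mul_assoc)
  have pp2: "norm (Pp *v x) \<le> norm x" for x
  proof -
    have "(norm (Pp *v x))^2 \<le> (norm x)^2"
      using proj_split[OF P(1), of x] unfolding Ppv[symmetric] by (metis le_add_same_cancel2 zero_le_power2)
    thus ?thesis by (rule power2_le_imp_le) simp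
  qed
  have pp1: "Pp *v (P *v a) = 0" for a
  proof -
    have "transpose P *v (P *v a) = a"
      using P(1) unfolding orthonormal_cols_def by (simp add: matrix_vector_mul_assoc)
    thus ?thesis unfolding Ppv by simp
  qed
  have ppV: "Pp *v v = 0" if vin: "v \<in> V0" for v
  proof -
    obtain a where "v = P *v a" using vin P(2) unfolding col_space_def by blast
    thus ?thesis using pp1 by simp
  qed
  have pp3: "Pp *v (W \<tau> *v z) = 0" for z
    by (rule ppV) (simp add: V0_def col_space_def)
  define S where "S = mat_sqrt (transpose (W \<tau>) ** W \<tau>)"
  define K where "K = matrix_inv S"
  note g = gen_lemma[OF injW[OF tau], folded S_def, folded K_def]
  define c where "c = spec_norm K"
  have c0: "c \<ge> 0" unfolding c_def by (rule spec_nonneg)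
  have cz: "norm z \<le> c * norm (W \<tau> *v z)" for z
  proof -
    have "z = K *v (S *v z)" using g(4) by (simp add: matrix_vector_mul_assoc)
    hence "norm z \<le> c * norm (S *v z)" using spec_bound[of K "S *v z"] c_def by metis
    thus ?thesis using g(5)[of z] by simp
  qed
  define N where "N = spec_norm (Pp ** W' \<tau> ** K)"
  have Neq: "spec_norm ((mat 1 - (\<chi> i j. orth_proj (col_space (W \<tau>)) (axis j 1) $ i)) ** W' \<tau>
                      ** matrix_inv (mat_sqrt (transpose (W \<tau>) ** W \<tau>))) = N"
    unfolding N_def Pp_def K_def S_def projm[unfolded V0_def] ..
  define Q where "Q t = onb_matrix TYPE('s) (col_space (W t))" for t
  have Q: "orthonormal_cols (Q t)" "col_space (Q t) = col_space (W t)" if "t \<in> {0..<T}" for t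
    using onb_exists[OF injW[OF that]] unfolding Q_def by auto
  define nu where "nu t = spec_norm (Pp ** Q t)" for t
  define f where "f t = max_principal_angle TYPE('s) (col_space (W \<tau>)) (col_space (W t))" for t
  have f_eq: "f t = arcsin (nu t)" if "t \<in> {0..<T}" for t
    using angle_eq(1)[OF P(1) Q(1)[OF that]]
    unfolding f_def max_principal_angle_def nu_def Pp_def P_def V0_def Q_def by simp
  have nu_tau: "nu \<tau> = 0"
  proof -
    have "nu \<tau> \<le> 0" unfolding nu_def
    proof (rule spec_le)
      fix y
      have "Q \<tau> *v y \<in> V0" using Q(2)[OF tau] unfolding V0_def col_space_def by blast
      hence "Pp *v (Q \<tau> *v y) = 0" by (rule ppV)
      thus "norm ((Pp ** Q \<tau>) *v y) \<le> 0 * norm y" by (simp add: matrix_vector_mul_assoc[symmetric])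
    qed
    thus ?thesis using spec_nonneg[of "Pp ** Q \<tau>"] nu_def by (simp add: antisym)
  qed
  have f_tau: "f \<tau> = 0" using f_eq[OF tau] nu_tau by simp
  have nu0: "nu t \<ge> 0" for t unfolding nu_def by (rule spec_nonneg)

  have der: "(W has_derivative (\<lambda>x. x *\<^sub>R W' \<tau>)) (at \<tau> within {0..<T})"
    using assms(2)[OF tau] unfolding has_vector_derivative_def .
  hence "((\<lambda>y. (1 / norm (y - \<tau>)) *\<^sub>R (W y - (W \<tau> + (y - \<tau>) *\<^sub>R W' \<tau>))) \<longlongrightarrow> 0) (at \<tau> within {0..<T})"
    unfolding has_derivative_within by blast
  hence lim1: "((\<lambda>y. (1 / norm (y - \<tau>)) *\<^sub>R (W y - (W \<tau> + (y - \<tau>) *\<^sub>R W' \<tau>))) \<longlongrightarrow> 0) (at_right \<tau>)"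
    by (rule filt[OF tau])
  define E where "E t = (1 / (t - \<tau>)) *\<^sub>R (W t - W \<tau>) - W' \<tau>" for t
  have evgt: "\<forall>\<^sub>F t in at_right \<tau>. \<tau> < t \<and> t < T"
    unfolding eventually_at_right_field using tau by auto
  have "\<forall>\<^sub>F t in at_right \<tau>. (1 / norm (t - \<tau>)) *\<^sub>R (W t - (W \<tau> + (t - \<tau>) *\<^sub>R W' \<tau>)) = E t"
    using evgt
  proof (rule eventually_mono)
    fix t assume t: "\<tau> < t \<and> t < T"
    have "norm (t - \<tau>) = t - \<tau>" using t by simp
    show "(1 / norm (t - \<tau>)) *\<^sub>R (W t - (W \<tau> + (t - \<tau>) *\<^sub>R W' \<tau>)) = E t"
    proof -
      have "W t - (W \<tau> + (t - \<tau>) *\<^sub>R W' \<tau>) = (W t - W \<tau>) - (t - \<tau>) *\<^sub>R W' \<tau>" by simp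
      moreover have "(1 / (t - \<tau>)) *\<^sub>R ((t - \<tau>) *\<^sub>R W' \<tau>) = W' \<tau>" using t by simp
      ultimately show ?thesis using \<open>norm (t - \<tau>) = t - \<tau>\<close>
        by (simp only: E_def scaleR_diff_right)
    qed
  qed
  hence Elim: "(E \<longlongrightarrow> 0) (at_right \<tau>)" using Lim_transform_eventually lim1 by blast
  have "continuous (at \<tau> within {0..<T}) W" by (rule has_vector_derivative_continuous[OF assms(2)[OF tau]])
  hence "(W \<longlongrightarrow> W \<tau>) (at \<tau> within {0..<T})" by (simp add: continuous_within)
  hence "(W \<longlongrightarrow> W \<tau>) (at_right \<tau>)" by (rule filt[OF tau])
  hence Dlim: "((\<lambda>t. W t - W \<tau>) \<longlongrightarrow> 0) (at_right \<tau>)"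
    using tendsto_diff[of W "W \<tau>" _ "\<lambda>_. W \<tau>" "W \<tau>"] by simp
  define eta where "eta t = (\<Sum>i\<in>UNIV. \<Sum>j\<in>UNIV. \<bar>E t $ i $ j\<bar>)" for t
  define beta where "beta t = (\<Sum>i\<in>UNIV. \<Sum>j\<in>UNIV. \<bar>(W t - W \<tau>) $ i $ j\<bar>)" for t
  have eta_lim: "(eta \<longlongrightarrow> 0) (at_right \<tau>)" unfolding eta_def by (rule comp_sum_tendsto[OF Elim])
  have beta_lim: "(beta \<longlongrightarrow> 0) (at_right \<tau>)" unfolding beta_def by (rule comp_sum_tendsto[OF Dlim])
  have eta0: "eta t \<ge> 0" for t unfolding eta_def by (rule comp_sum_nonneg)
  have beta0: "beta t \<ge> 0" for t unfolding beta_def by (rule comp_sum_nonneg)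
  have bE: "norm (E t *v z) \<le> eta t * norm z" for t z unfolding eta_def by (rule mat_bound)
  have bD: "norm ((W t - W \<tau>) *v z) \<le> beta t * norm z" for t z unfolding beta_def by (rule mat_bound)
  have "((\<lambda>t. beta t * c) \<longlongrightarrow> 0 * c) (at_right \<tau>)" by (intro tendsto_intros beta_lim)
  hence "\<forall>\<^sub>F t in at_right \<tau>. beta t * c < 1" by (intro order_tendstoD(2)) auto
  with evgt have ev: "\<forall>\<^sub>F t in at_right \<tau>. \<tau> < t \<and> t < T \<and> beta t * c < 1"
    by (simp add: eventually_conj_iff)
  have lowb: "\<forall>\<^sub>F t in at_right \<tau>. (N - eta t * c) / (1 + beta t * c) \<le> nu t / (t - \<tau>)"
    using ev
  proof (rule eventually_mono)
    fix t assume t: "\<tau> < t \<and> t < T \<and> beta t * c < 1"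
    hence tT: "t \<in> {0..<T}" using tau by auto
    have "N \<le> nu t / (t - \<tau>) * (1 + beta t * c) + eta t * c"
      unfolding N_def nu_def
      by (rule lower_bound[OF _ Q(1)[OF tT] Q(2)[OF tT] pp3 pp2 g(6) cz bD bE E_def c0 eta0 beta0]) (use t in auto)
    moreover have "1 + beta t * c > 0" using beta0[of t] c0 by (simp add: add_pos_nonneg)
    ultimately show "(N - eta t * c) / (1 + beta t * c) \<le> nu t / (t - \<tau>)"
      by (simp add: divide_le_eq algebra_simps)
  qed
  have upb: "\<forall>\<^sub>F t in at_right \<tau>. nu t / (t - \<tau>) \<le> (N + eta t * c) / (1 - beta t * c)"
    using ev
  proof (rule eventually_mono)
    fix t assume t: "\<tau> < t \<and> t < T \<and> beta t * c < 1"
    hence tT: "t \<in> {0..<T}" using tau by auto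
    have "nu t \<le> (t - \<tau>) * (N + eta t * c) / (1 - beta t * c)"
      unfolding N_def nu_def
      by (rule upper_bound[OF _ Q(1)[OF tT] Q(2)[OF tT] pp3 pp2 g(4) g(5) cz bD bE E_def _ c0 eta0 beta0])
         (use t in auto)
    thus "nu t / (t - \<tau>) \<le> (N + eta t * c) / (1 - beta t * c)"
      using t by (simp add: divide_le_eq mult.commute)
  qed
  have l1: "((\<lambda>t. (N - eta t * c) / (1 + beta t * c)) \<longlongrightarrow> (N - 0 * c) / (1 + 0 * c)) (at_right \<tau>)"
    by (intro tendsto_intros eta_lim beta_lim) simp
  have l2: "((\<lambda>t. (N + eta t * c) / (1 - beta t * c)) \<longlongrightarrow> (N + 0 * c) / (1 - 0 * c)) (at_right \<tau>)"
    by (intro tendsto_intros eta_lim beta_lim) simp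
  have L: "((\<lambda>t. nu t / (t - \<tau>)) \<longlongrightarrow> N) (at_right \<tau>)"
    using real_tendsto_sandwich[OF lowb upb] l1 l2 by simp
  have "((\<lambda>t. t - \<tau>) \<longlongrightarrow> \<tau> - \<tau>) (at_right \<tau>)"
    by (intro tendsto_intros)
  hence hlim: "((\<lambda>t. t - \<tau>) \<longlongrightarrow> 0) (at_right \<tau>)" by simp
  have "((\<lambda>t. (t - \<tau>) * (nu t / (t - \<tau>))) \<longlongrightarrow> 0 * N) (at_right \<tau>)"
    by (intro tendsto_intros hlim L)
  moreover have "\<forall>\<^sub>F t in at_right \<tau>. (t - \<tau>) * (nu t / (t - \<tau>)) = nu t"
    using evgt by (rule eventually_mono) simp
  ultimately have nulim: "(nu \<longlongrightarrow> 0) (at_right \<tau>)"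
    using Lim_transform_eventually by fastforce
  define gq where "gq x = (if x = 0 then 1 else arcsin x / x)" for x :: real
  have "((\<lambda>t. gq (nu t)) \<longlongrightarrow> gq 0) (at_right \<tau>)"
    using isCont_tendsto_compose[OF arcsin_ratio_cont nulim] unfolding gq_def by simp
  hence "((\<lambda>t. gq (nu t) * (nu t / (t - \<tau>))) \<longlongrightarrow> 1 * N) (at_right \<tau>)"
    using L unfolding gq_def by (intro tendsto_intros) auto
  moreover have "\<forall>\<^sub>F t in at_right \<tau>. gq (nu t) * (nu t / (t - \<tau>)) = (f t - f \<tau>) / (t - \<tau>)"
    using evgt
  proof (rule eventually_mono)
    fix t assume t: "\<tau> < t \<and> t < T"
    hence tT: "t \<in> {0..<T}" using tau by auto
    show "gq (nu t) * (nu t / (t - \<tau>)) = (f t - f \<tau>) / (t - \<tau>)"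
      using f_eq[OF tT] f_tau by (cases "nu t = 0") (auto simp: gq_def)
  qed
  ultimately have "((\<lambda>t. (f t - f \<tau>) / (t - \<tau>)) \<longlongrightarrow> N) (at_right \<tau>)"
    using Lim_transform_eventually by fastforce
  hence "(f has_real_derivative N) (at_right \<tau>)" by (simp add: has_field_derivative_iff)
  thus ?thesis unfolding Neq f_def .
qed


end
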